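(* For every rooted graph $(F,R)$ and integer $\ell\ge 1$, every $K\in \mathcal{F}^\ell$ satisfies \[e(K)\ge \rho(F,R)\,(v(K)-|R|).\]
   Context: A rooted graph $(F,R)$ is a graph $F$ with a root set $R\subsetneq V(F)$. $\mathcal{F}^\ell$ is the set of all graphs obtained as the union of $\ell$ distinct labeled copies of $F$ which all agree on the root set $R$. For $S\subseteq V(F)$, $e_S(F)$ is the number of edges of $F$ incident to a vertex of $S$, and $\rho(F,R)=\min_{\emptyset\ne S\subseteq V(F)\setminus R} e_S(F)/|S|$. $e(K)$ and $v(K)$ denote the numbers of edges and vertices of $K$. *)

theory Defs
  imports Complex_Main
begin

definition graph :: "'a set \<Rightarrow> 'a set set \<Rightarrow> bool" where
  "graph V E \<longleftrightarrow> finite V \<and> (\<forall>e\<in>E. e \<subseteq> V \<and> card e = 2)"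

definition rooted_graph :: "'a set \<Rightarrow> 'a set set \<Rightarrow> 'a set \<Rightarrow> bool" where
  "rooted_graph V E R \<longleftrightarrow> graph V E \<and> R \<subset> V"

definition e_S :: "'a set set \<Rightarrow> 'a set \<Rightarrow> nat" where
  "e_S E S = card {e \<in> E. e \<inter> S \<noteq> {}}"

definition rho :: "'a set \<Rightarrow> 'a set set \<Rightarrow> 'a set \<Rightarrow> real" where
  "rho V E R = Min {real (e_S E S) / real (card S) | S. S \<noteq> {} \<and> S \<subseteq> V - R}"

text \<open>(VK,EK) belongs to F^l: it is the union of l distinct labeled copies of F
  (injective maps phi i, i < l, pairwise distinct on V(F)) which all agree on R.\<close>
definition in_F_ell ::
  "'a set \<Rightarrow> 'a set set \<Rightarrow> 'a set \<Rightarrow> nat \<Rightarrow> 'b set \<Rightarrow> 'b set set \<Rightarrow> bool" where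
  "in_F_ell V E R l VK EK \<longleftrightarrow>
     (\<exists>\<phi> :: nat \<Rightarrow> 'a \<Rightarrow> 'b.
        (\<forall>i<l. inj_on (\<phi> i) V) \<and>
        (\<forall>i<l. \<forall>j<l. \<forall>r\<in>R. \<phi> i r = \<phi> j r) \<and>
        (\<forall>i<l. \<forall>j<l. i \<noteq> j \<longrightarrow> (\<exists>v\<in>V. \<phi> i v \<noteq> \<phi> j v)) \<and>
        VK = (\<Union>i<l. \<phi> i ` V) \<and>
        EK = (\<Union>i<l. (\<lambda>e. \<phi> i ` e) ` E))"

end

theory Submission
  imports Defs
begin

lemma rho_le:
  assumes "finite V" "S \<noteq> {}" "S \<subseteq> V - R"
  shows "rho V E R * real (card S) \<le> real (e_S E S)"
proof -
  have fin: "finite {real (e_S E S) / real (card S) | S. S \<noteq> {} \<and> S \<subseteq> V - R}"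
  proof -
    have "{real (e_S E S) / real (card S) | S. S \<noteq> {} \<and> S \<subseteq> V - R}
        \<subseteq> (\<lambda>S. real (e_S E S) / real (card S)) ` Pow V" by blast
    then show ?thesis using assms(1) finite_subset by blast
  qed
  have "rho V E R \<le> real (e_S E S) / real (card S)"
    unfolding rho_def using assms by (intro Min_le[OF fin]) blast
  moreover have "card S > 0" using assms finite_subset
    by (metis Diff_subset card_gt_0_iff subset_trans)
  ultimately show ?thesis by (simp add: pos_le_divide_eq)
qed

lemma rho_le0:
  assumes "finite V" "S \<subseteq> V - R"
  shows "rho V E R * real (card S) \<le> real (e_S E S)"
  using rho_le[OF assms(1) _ assms(2)] by (cases "S = {}") auto

theorem lemma4p1:
  fixes V :: "'a set" and E :: "'a set set" and R :: "'a set"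
    and l :: nat and VK :: "'b set" and EK :: "'b set set"
  assumes "rooted_graph V E R"
    and "l \<ge> 1"
    and "in_F_ell V E R l VK EK"
  shows "real (card EK) \<ge> rho V E R * (real (card VK) - real (card R))"
proof -
  have finV: "finite V" and EV: "\<And>e. e \<in> E \<Longrightarrow> e \<subseteq> V" and RV: "R \<subseteq> V"
    using assms(1) unfolding rooted_graph_def graph_def by auto
  have finE: "finite E" using EV finV
    by (meson PowI finite_Pow_iff finite_subset subsetI)
  obtain \<phi> :: "nat \<Rightarrow> 'a \<Rightarrow> 'b" where
    inj: "\<And>i. i<l \<Longrightarrow> inj_on (\<phi> i) V" and
    agree: "\<And>i j r. i<l \<Longrightarrow> j<l \<Longrightarrow> r\<in>R \<Longrightarrow> \<phi> i r = \<phi> j r" and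
    VK: "VK = (\<Union>i<l. \<phi> i ` V)" and
    EK: "EK = (\<Union>i<l. (\<lambda>e. \<phi> i ` e) ` E)"
    using assms(3) unfolding in_F_ell_def by blast
  define VKn where "VKn n = (\<Union>i<n. \<phi> i ` V)" for n
  define EKn where "EKn n = (\<Union>i<n. (\<lambda>e. \<phi> i ` e) ` E)" for n
  have finVK: "finite (VKn n)" for n unfolding VKn_def using finV by auto
  have finEK: "finite (EKn n)" for n unfolding EKn_def using finE by auto
  have injE: "inj_on (\<lambda>e. \<phi> i ` e) E" if "i < l" for i
    using inj_on_image_eq_iff[OF inj[OF that]] EV unfolding inj_on_def
    by metis
  have EKsub: "\<And>x. x \<in> EKn n \<Longrightarrow> x \<subseteq> VKn n" for n
    unfolding EKn_def VKn_def using EV by blast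
  have main: "1 \<le> n \<Longrightarrow> n \<le> l \<Longrightarrow>
      rho V E R * (real (card (VKn n)) - real (card R)) \<le> real (card (EKn n))" for n
  proof (induction n)
    case 0 then show ?case by simp
  next
    case (Suc n)
    show ?case
    proof (cases "n = 0")
      case True
      have l0: "0 < l" using Suc by simp
      have v1: "VKn (Suc n) = \<phi> 0 ` V" unfolding VKn_def True by (simp add: lessThan_Suc)
      have e1: "EKn (Suc n) = (\<lambda>e. \<phi> 0 ` e) ` E" unfolding EKn_def True by (simp add: lessThan_Suc)
      have cv: "card (VKn (Suc n)) = card V" using v1 card_image inj[OF l0] by metis
      have ce: "card (EKn (Suc n)) = card E" using e1 card_image injE[OF l0] by metis
      have cd: "real (card V) - real (card R) = real (card (V - R))"
        using RV finV by (simp add: card_Diff_subset finite_subset of_nat_diff card_mono)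
      have "e_S E (V - R) \<le> card E" unfolding e_S_def using finE
        by (intro card_mono) auto
      moreover have "rho V E R * real (card (V - R)) \<le> real (e_S E (V - R))"
        by (rule rho_le0[OF finV]) auto
      ultimately have "rho V E R * real (card (V - R)) \<le> real (card E)"
        by (meson of_nat_le_iff order_trans)
      then show ?thesis unfolding cv ce cd .
    next
      case False
      have nl: "n < l" and n1: "1 \<le> n" using Suc False by auto
      have IH: "rho V E R * (real (card (VKn n)) - real (card R)) \<le> real (card (EKn n))"
        using Suc False by simp
      define S where "S = {v \<in> V. \<phi> n v \<notin> VKn n}"
      have SR: "S \<subseteq> V - R"
      proof
        fix v assume "v \<in> S"
        moreover have "v \<notin> R"
        proof
          assume "v \<in> R"
          then have "\<phi> n v = \<phi> 0 v" using agree[of n 0 v] nl by simp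
          moreover have "\<phi> 0 v \<in> VKn n" using n1 \<open>v \<in> R\<close> RV unfolding VKn_def by (intro UN_I[of 0]) auto
          ultimately show False using \<open>v \<in> S\<close> unfolding S_def by simp
        qed
        ultimately show "v \<in> V - R" unfolding S_def by blast
      qed
      have vs: "VKn (Suc n) = VKn n \<union> \<phi> n ` S"
        unfolding VKn_def S_def by (auto simp: lessThan_Suc)
      have "card (VKn (Suc n)) = card (VKn n) + card (\<phi> n ` S)"
        unfolding vs using finVK finV unfolding S_def
        by (intro card_Un_disjoint) auto
      moreover have "card (\<phi> n ` S) = card S"
        using inj[OF nl] by (intro card_image) (auto simp: S_def inj_on_def)
      ultimately have cv: "card (VKn (Suc n)) = card (VKn n) + card S" by simp
      define N where "N = (\<lambda>e. \<phi> n ` e) ` {e \<in> E. e \<inter> S \<noteq> {}}"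
      have cN: "card N = e_S E S" unfolding N_def e_S_def
        using injE[OF nl] by (intro card_image) (auto simp: inj_on_def)
      have disj: "EKn n \<inter> N = {}"
      proof (rule ccontr)
        assume "EKn n \<inter> N \<noteq> {}"
        then obtain x where x1: "x \<in> EKn n" and x2: "x \<in> N" by blast
        from x2 obtain e s where "e \<in> E" "s \<in> e" "s \<in> S" "x = \<phi> n ` e"
          unfolding N_def by blast
        then have "\<phi> n s \<in> x" by auto
        then have "\<phi> n s \<in> VKn n" using EKsub[OF x1] by auto
        then show False using \<open>s \<in> S\<close> unfolding S_def by auto
      qed
      have sub: "EKn n \<union> N \<subseteq> EKn (Suc n)" unfolding EKn_def N_def
        by (auto simp: lessThan_Suc)
      have "card (EKn n) + card N = card (EKn n \<union> N)"
        using disj finEK[of n] finite_subset[OF sub finEK[of "Suc n"]]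
        by (intro card_Un_disjoint[symmetric]) auto
      also have "\<dots> \<le> card (EKn (Suc n))" using sub finEK by (intro card_mono) auto
      finally have ce: "card (EKn n) + e_S E S \<le> card (EKn (Suc n))" using cN by simp
      have "rho V E R * real (card S) \<le> real (e_S E S)" using rho_le0[OF finV SR] .
      moreover have "real (card (EKn n)) + real (e_S E S) \<le> real (card (EKn (Suc n)))"
        using ce by (metis of_nat_add of_nat_le_iff)
      moreover have cvr: "real (card (VKn (Suc n))) = real (card (VKn n)) + real (card S)"
        using cv by simp
      moreover have "rho V E R * (real (card (VKn n)) + real (card S) - real (card R))
          = rho V E R * (real (card (VKn n)) - real (card R)) + rho V E R * real (card S)"
        by (simp add: algebra_simps)
      ultimately show ?thesis using IH unfolding cvr by linarith
    qed
  qed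
  show ?thesis using main[of l] assms(2) VK EK unfolding VKn_def EKn_def by simp
qed

end
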